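(* Let $A\in\mathbb{R}^{n\times n}$ have all eigenvalues in the open unit disk and let $B\in\mathbb{R}^{n\times m}$. Let $N\geq n+m$ and for $i=1,\dots,N$ let $x_{i,1},x_{i,2}\in\mathbb{R}^{n}$, $u_{i,1}\in\mathbb{R}^{m}$ satisfy $x_{i,2}=Ax_{i,1}+Bu_{i,1}$. Put $X_{N,1}:=(x_{1,1},\dots,x_{N,1})^{\top}$, $X_{N,2}:=(x_{1,2},\dots,x_{N,2})^{\top}$ (in $\mathbb{R}^{N\times n}$), $U_{N,1}:=(u_{1,1},\dots,u_{N,1})^{\top}\in\mathbb{R}^{N\times m}$. Let $(Z_{N,2},Z_{B_{N,1}})\in\mathbb{R}^{N\times n}\times\mathbb{R}^{m\times N}$ be a solution of $X_{N,2}X_{N,1}^{\top}=X_{N,1}Z_{N,2}^{\top}+U_{N,1}Z_{B_{N,1}}$, and let $U_{B_{N,1}}\in\mathbb{R}^{N\times n}$ be a solution of $X_{N,1}U_{B_{N,1}}^{\top}=X_{N,1}X_{N,2}^{\top}-Z_{N,2}X_{N,1}^{\top}$. Let $\hat{A}\in\mathbb{R}^{r\times r}$, $\hat{B}\in\mathbb{R}^{r\times m}$, $\hat{C}\in\mathbb{R}^{n\times r}$, and assume: (a1) $(X_{N,1}^{\dagger}Z_{N,2},X_{N,1}^{\dagger}X_{N,1})$ is a regular matrix pencil; (a2) the spectra of $(X_{N,1}^{\dagger}Z_{N,2},X_{N,1}^{\dagger}X_{N,1})$ and $(I_r,\hat{A})$ are disjoint; (a3) $(X_{N,1}^{\dagger}(X_{N,2}-U_{B_{N,1}}),X_{N,1}^{\dagger}X_{N,1})$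 is a regular matrix pencil; (a4) the spectra of $(X_{N,1}^{\dagger}(X_{N,2}-U_{B_{N,1}}),X_{N,1}^{\dagger}X_{N,1})$ and $(I_r,\hat{A})$ are disjoint; (A2) every eigenvalue $\lambda$ of $\hat{A}$ satisfies $0<|\lambda|<1$; (b1) $\operatorname{rank}\begin{pmatrix}X_{N,1}&U_{N,1}\end{pmatrix}=n+m$; (b2) $\operatorname{rank}X_{N,1}=n$; (b3) $\operatorname{rank}U_{N,1}=m$. Let $P\in\mathbb{R}^{r\times r}$, $Q\in\mathbb{R}^{r\times r}$ be the solutions of $\hat{A}P\hat{A}^{\top}+\hat{B}\hat{B}^{\top}=P$ and $\hat{A}^{\top}Q\hat{A}+\hat{C}^{\top}\hat{C}=Q$. Let $R,S\in\mathbb{R}^{n\times r}$ satisfy $$X_{N,1}^{\dagger}Z_{N,2}R\hat{A}^{\top}+X_{N,1}^{\dagger}Z_{B_{N,1}}^{\top}\hat{B}^{\top}=X_{N,1}^{\dagger}X_{N,1}R,\qquad X_{N,1}^{\dagger}(X_{N,2}-U_{B_{N,1}})S\hat{A}-X_{N,1}^{\dagger}X_{N,1}\hat{C}=X_{N,1}^{\dagger}X_{N,1}S,$$ and let $S_B\in\mathbb{R}^{m\times r}$ satisfy $U_{N,1}S_{B}=U_{B_{N,1}}S$. Define $$\tilde{\nabla}_{\hat{A}}f:=2\big(Q\hat{A}P+(S^{\top}R-S_{B}^{\top}\hat{B}^{\top})(\hat{A}^{\dagger})^{\top}\big),\quad \tilde{\nabla}_{\hat{B}}f:=2(S_{B}^{\top}+Q\hat{B}),\quad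 \tilde{\nabla}_{\hat{C}}f:=2(\hat{C}P-R).$$ Let $R_*,S_*\in\mathbb{R}^{n\times r}$ be the solutions of $AR_*\hat{A}^{\top}+B\hat{B}^{\top}=R_*$ and $A^{\top}S_*\hat{A}-\hat{C}=S_*$. Then $$\tilde{\nabla}_{\hat{A}}f=\nabla_{\hat{A}}f=2(Q\hat{A}P+S_*^{\top}AR_* ),\quad \tilde{\nabla}_{\hat{B}}f=\nabla_{\hat{B}}f=2(S_*^{\top}B+Q\hat{B}),\quad \tilde{\nabla}_{\hat{C}}f=\nabla_{\hat{C}}f=2(\hat{C}P-R_* ).$$
   Context: $M^{\dagger}$ denotes the Moore–Penrose pseudoinverse. A pair $(M,K)$ of square matrices of equal size is a regular matrix pencil if $\det(M-\lambda K)$ is not identically zero in $\lambda$; its spectrum is the set of $\lambda\in\mathbb{C}$ with $\det(M-\lambda K)=0$, together with $\infty$ if $K$ is singular. The spectrum of $(I_r,\hat A)$ is the set of $\lambda\in\mathbb{C}$ with $\det(I_r-\lambda\hat A)=0$ (plus $\infty$ if $\hat A$ is singular). Background: for the system $x_{k+1}=Ax_k+Bu_k$, $y_k=x_k$ with transfer function $H(z)=(zI_n-A)^{-1}B$ and a reduced model with $H_r(z)=\hat{C}(zI_r-\hat{A})^{-1}\hat{B}$, $\hat A$ stable, one has $\|H-H_r\|_{h^2}^2=\operatorname{tr}(\Sigma_c)+f(\hat A,\hat B,\hat C)$ where $A\Sigma_cA^\top+BB^\top=\Sigma_c$ and $f(\hat{A},\hat{B},\hat{C})=\operatorname{tr}(\hat{C}P\hat{C}^{\top})-2\operatorname{tr}(R_*\hat{C}^{\top})$;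 by known results (Van Dooren et al.; Bunse-Gerstner et al.) the entrywise partial-derivative gradients $\nabla_{\hat A}f,\nabla_{\hat B}f,\nabla_{\hat C}f$ of $f$ are given by the formulas $2(Q\hat{A}P+S_*^{\top}AR_* )$, $2(S_*^{\top}B+Q\hat{B})$, $2(\hat{C}P-R_* )$. *)

theory Defs
  imports "HOL-Analysis.Analysis"
begin

text \<open>Complexification of a real matrix.\<close>
definition cmat :: "real^'n^'m \<Rightarrow> complex^'n^'m" where
  "cmat M = (\<chi> i j. complex_of_real (M$i$j))"

text \<open>Eigenvalues of a real square matrix (complex roots of the characteristic polynomial).\<close>
definition eigenvalues :: "real^'n^'n \<Rightarrow> complex set" where
  "eigenvalues M = {z. det (mat z - cmat M) = 0}"

text \<open>Moore--Penrose pseudoinverse: the unique matrix satisfying the four Penrose equations.\<close>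
definition pinv :: "real^'n^'m \<Rightarrow> real^'m^'n" where
  "pinv M = (THE X. M ** X ** M = M \<and> X ** M ** X = X \<and>
                    transpose (M ** X) = M ** X \<and> transpose (X ** M) = X ** M)"

text \<open>Regular matrix pencil (M,K): det(M - z K) not identically zero.\<close>
definition regular_pencil :: "real^'n^'n \<Rightarrow> real^'n^'n \<Rightarrow> bool" where
  "regular_pencil M K \<longleftrightarrow> (\<exists>z::complex. det (cmat M - mat z ** cmat K) \<noteq> 0)"

text \<open>Spectrum of a pencil (M,K); None stands for the point \<infinity>,
  which belongs to the spectrum iff K is singular.\<close>
definition pencil_spectrum :: "real^'n^'n \<Rightarrow> real^'n^'n \<Rightarrow> complex option set" where
  "pencil_spectrum M K =
     Some ` {z. det (cmat M - mat z ** cmat K) = 0} \<union> (if det K = 0 then {None} else {})"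

text \<open>Horizontal concatenation [X U].\<close>
definition hcat :: "real^'n^'k \<Rightarrow> real^'m^'k \<Rightarrow> real^('n + 'm)^'k" where
  "hcat X U = (\<chi> i j. case j of Inl a \<Rightarrow> X$i$a | Inr b \<Rightarrow> U$i$b)"

end

theory Submission
  imports Defs "HOL-Computational_Algebra.Polynomial" "HOL-Computational_Algebra.Fundamental_Theorem_Algebra"
begin


definition pv :: "complex poly \<Rightarrow> complex^'r^'r \<Rightarrow> complex^'r \<Rightarrow> complex^'r" where
  "pv p K v = fold_coeffs (\<lambda>a u. a *s v + K *v u) p 0"

lemma pv_0[simp]: "pv 0 K v = 0"
  by (simp add: pv_def)

lemma pv_pCons[simp]: "pv (pCons a p) K v = a *s v + K *v pv p K v"
  by (cases "a = 0 \<and> p = 0") (auto simp: pv_def fold_coeffs_def cCons_def)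

lemma mv_smult: "K *v (c *s x) = c *s (K *v (x::'a::comm_ring_1^'n))"
  by (simp add: vec_eq_iff matrix_vector_mult_def sum_distrib_left algebra_simps)

lemma pv_add: "pv (p + q) K v = pv p K v + pv q K v"
proof (induction p arbitrary: q rule: pCons_induct)
  case 0 then show ?case by simp
next
  case (pCons a p)
  obtain b q' where q: "q = pCons b q'" by (cases q rule: pCons_cases) auto
  show ?case
    by (simp add: q pCons.IH vector_add_ldistrib matrix_vector_right_distrib algebra_simps)
qed

lemma pv_smult: "pv (smult c p) K v = c *s pv p K v"
  by (induction p rule: pCons_induct) (simp_all add: vector_add_ldistrib vector_smult_assoc mv_smult)

lemma pv_lin_add: "pv p K (x + y) = pv p K x + pv p K y"
  by (induction p rule: pCons_induct) (simp_all add: vector_add_ldistrib matrix_vector_right_distrib algebra_simps)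

lemma pv_lin_smult: "pv p K (c *s x) = c *s pv p K x"
  by (induction p rule: pCons_induct) (simp_all add: vector_add_ldistrib vector_smult_assoc mv_smult)

lemma pv_mult: "pv (p * q) K v = pv p K (pv q K v)"
  by (induction p rule: pCons_induct) (simp_all add: pv_add pv_smult)

lemma pv_comm: assumes "A ** D = D ** K" shows "pv p A (D *v w) = D *v pv p K w"
  by (induction p rule: pCons_induct) (simp_all add: matrix_vector_mul_assoc assms matrix_vector_right_distrib mv_smult)

lemma pv_diff: "pv (p - q) K v = pv p K v - pv q K v"
proof -
  have "p - q = p + smult (-1) q" by simp
  then show ?thesis by (simp only: pv_add pv_smult) simp
qed

lemma pv_sum: "pv (sum f A) K v = (\<Sum>x\<in>A. pv (f x) K v)"
  by (induction A rule: infinite_finite_induct) (simp_all add: pv_add)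

lemma pv_monom: "pv (monom c j) K w = c *s (((*v) K ^^ j) w)"
proof (induction j)
  case 0
  have "monom c 0 = pCons c 0" by (simp add: monom_0)
  then show ?case by simp
next
  case (Suc j)
  then show ?case by (simp add: monom_Suc mv_smult)
qed

lemma annih_exists:
  fixes K :: "complex^'r^'r"
  shows "\<exists>p. p \<noteq> 0 \<and> pv p K w = 0"
proof -
  define n where "n = CARD('r)"
  define u where "u j = ((*v) K ^^ j) w" for j
  show ?thesis
  proof (cases "inj_on u {..n}")
    case False
    then obtain i j where ij: "i \<noteq> j" "u i = u j" by (auto simp: inj_on_def)
    define p where "p = monom (1::complex) i - monom 1 j"
    have "coeff p i = 1" using ij by (simp add: p_def coeff_monom)
    then have "p \<noteq> 0" by auto
    moreover have "pv p K w = 0"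
      using ij by (simp add: p_def pv_diff pv_monom u_def)
    ultimately show ?thesis by blast
  next
    case True
    define S where "S = u ` {..n}"
    have cS: "card S = Suc n" using True by (simp add: S_def card_image)
    have finS: "finite S" by (simp add: S_def)
    have "vec.dependent S"
    proof (rule ccontr)
      assume "\<not> vec.dependent S"
      then have "card S \<le> vec.dim S" using vec.independent_bound_general by blast
      also have "\<dots> \<le> vec.dim (UNIV :: (complex^'r) set)" by (rule vec.dim_subset) simp
      also have "\<dots> = n" by (simp add: card_cart_basis n_def)
      finally show False using cS by simp
    qed
    then obtain c where c: "\<exists>v\<in>S. c v \<noteq> 0" "(\<Sum>v\<in>S. c v *s v) = 0"
      using vec.dependent_finite[OF finS] by blast
    define p where "p = (\<Sum>j\<le>n. monom (c (u j)) j)"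
    have cp: "coeff p j = c (u j)" if "j \<le> n" for j
      using that by (simp add: p_def coeff_sum coeff_monom)
    from c(1) obtain j where j: "j \<le> n" "c (u j) \<noteq> 0" by (auto simp: S_def)
    have "p \<noteq> 0" using cp[OF j(1)] j(2) by auto
    have "pv p K w = (\<Sum>j\<le>n. c (u j) *s u j)"
      by (simp add: p_def pv_sum pv_monom u_def)
    also have "\<dots> = (\<Sum>v\<in>S. c v *s v)"
      unfolding S_def by (subst sum.reindex[OF True]) simp
    finally have "pv p K w = 0" using c(2) by simp
    with \<open>p \<noteq> 0\<close> show ?thesis by blast
  qed
qed

lemma pv_lin1: "pv [:-\<mu>, 1:] K y = K *v y - \<mu> *s y"
  by (simp add: algebra_simps)

lemma root_eig:
  fixes A :: "complex^'n^'n"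
  shows "p \<noteq> 0 \<Longrightarrow> y \<noteq> 0 \<Longrightarrow> pv p A y = 0 \<Longrightarrow> \<exists>\<mu> z. poly p \<mu> = 0 \<and> z \<noteq> 0 \<and> A *v z = \<mu> *s z"
proof (induction "degree p" arbitrary: p y rule: less_induct)
  case less
  show ?case
  proof (cases "degree p = 0")
    case True
    then obtain c where p: "p = [:c:]" by (rule degree_eq_zeroE)
    with less.prems have "c \<noteq> 0" by auto
    with less.prems show ?thesis by (simp add: p)
  next
    case False
    then have "\<not> constant (poly p)" by (simp add: constant_degree)
    then obtain \<mu> where mu: "poly p \<mu> = 0" using fundamental_theorem_of_algebra by blast
    then obtain q where pq: "p = [:-\<mu>, 1:] * q" using poly_eq_0_iff_dvd by (metis dvdE)
    define z where "z = pv [:-\<mu>, 1:] A y"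
    have "pv p A y = pv q A z" unfolding pq z_def by (simp only: mult.commute[of "[:-\<mu>, 1:]" q] pv_mult)
    then have z0: "pv q A z = 0" using less.prems(3) by simp
    show ?thesis
    proof (cases "z = 0")
      case True
      then have "A *v y = \<mu> *s y" by (simp add: z_def pv_lin1)
      with mu less.prems(2) show ?thesis by blast
    next
      case False
      have q0: "q \<noteq> 0" using less.prems pq by auto
      have "degree ([:-\<mu>, 1:] * q) = degree [:-\<mu>, 1:] + degree q" by (rule degree_mult_eq) (use q0 in auto)
      then have "degree q < degree p" using pq by simp
      from less.hyps[OF this q0 False z0] obtain \<nu> z' where "poly q \<nu> = 0" "z' \<noteq> 0" "A *v z' = \<nu> *s z'"
        by blast
      then show ?thesis by (auto simp: pq)
    qed
  qed
qed

lemma sylv: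
  fixes A :: "complex^'n^'n" and K :: "complex^'r^'r" and D :: "complex^'r^'n"
  assumes AD: "A ** D = D ** K"
    and disj: "\<And>\<mu> y z. y \<noteq> 0 \<Longrightarrow> A *v y = \<mu> *s y \<Longrightarrow> z \<noteq> 0 \<Longrightarrow> K *v z = \<mu> *s z \<Longrightarrow> False"
  shows "D = 0"
proof -
  have "D *v w = 0" for w
  proof (rule ccontr)
    assume Dw: "D *v w \<noteq> 0"
    define P where "P d \<longleftrightarrow> (\<exists>p. p \<noteq> 0 \<and> pv p K w = 0 \<and> degree p = d)" for d
    have "\<exists>d. P d" using annih_exists[of K w] by (auto simp: P_def)
    define d where "d = (LEAST d. P d)"
    have "P d" unfolding d_def using \<open>\<exists>d. P d\<close> by (metis LeastI_ex)
    then obtain p where p: "p \<noteq> 0" "pv p K w = 0" "degree p = d" by (auto simp: P_def)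
    have min: "d \<le> degree q" if "q \<noteq> 0" "pv q K w = 0" for q
      unfolding d_def using that by (intro Least_le) (auto simp: P_def)
    have "pv p A (D *v w) = 0" using pv_comm[OF AD] p(2) by simp
    from root_eig[OF p(1) Dw this] obtain \<mu> y where mu: "poly p \<mu> = 0" "y \<noteq> 0" "A *v y = \<mu> *s y"
      by blast
    obtain q where pq: "p = [:-\<mu>, 1:] * q" using mu(1) poly_eq_0_iff_dvd by (metis dvdE)
    have q0: "q \<noteq> 0" using p pq by auto
    have "degree ([:-\<mu>, 1:] * q) = degree [:-\<mu>, 1:] + degree q" by (rule degree_mult_eq) (use q0 in auto)
    then have "degree q < degree p" using pq by simp
    then have zq: "pv q K w \<noteq> 0" using min[OF q0] p(3) by fastforce
    have "pv [:-\<mu>, 1:] K (pv q K w) = 0" using p(2) unfolding pq by (simp only: pv_mult)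
    then have "K *v (pv q K w) = \<mu> *s (pv q K w)" by (simp add: pv_lin1)
    with disj[OF mu(2,3) zq] show False .
  qed
  then show ?thesis by (simp add: matrix_eq)
qed


lemma msub_l: "(A::'a::comm_ring_1^'n^'m) ** (B - C) = A ** B - A ** C"
  by (simp add: matrix_matrix_mult_def vec_eq_iff sum_subtractf[symmetric] algebra_simps)
lemma msub_r: "((B::'a::comm_ring_1^'n^'m) - C) ** A = B ** A - C ** A"
  by (simp add: matrix_matrix_mult_def vec_eq_iff sum_subtractf[symmetric] algebra_simps)
lemma madd_r: "((B::'a::comm_ring_1^'n^'m) + C) ** A = B ** A + C ** A"
  by (simp add: matrix_matrix_mult_def vec_eq_iff sum.distrib[symmetric] algebra_simps)
lemma tr_add: "transpose (A + B) = transpose A + transpose (B::'a::comm_ring_1^'n^'m)"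
  by (simp add: transpose_def vec_eq_iff)
lemma tr_diff: "transpose (A - B) = transpose A - transpose (B::'a::comm_ring_1^'n^'m)"
  by (simp add: transpose_def vec_eq_iff)

lemma cmat_mult: "cmat (X ** Y) = cmat X ** cmat Y"
  by (simp add: cmat_def matrix_matrix_mult_def vec_eq_iff)
lemma cmat_transpose: "cmat (transpose X) = transpose (cmat X)"
  by (simp add: cmat_def transpose_def vec_eq_iff)
lemma cmat_diff: "cmat (X - Y) = cmat X - cmat Y"
  by (simp add: cmat_def vec_eq_iff)
lemma cmat_eq0: "cmat X = 0 \<Longrightarrow> X = 0"
  by (simp add: cmat_def vec_eq_iff)
lemma det_cmat: "det (cmat M) = complex_of_real (det M)"
  by (simp add: det_def cmat_def)

lemma eig_transpose: "eigenvalues (transpose X) = eigenvalues X"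
proof -
  have "mat z - cmat (transpose X) = transpose (mat z - cmat X)" for z
    by (simp add: cmat_transpose tr_diff)
  then show ?thesis by (simp add: eigenvalues_def)
qed

lemma kernel_det: "(M::'a::field^'n^'n) *v z = 0 \<Longrightarrow> z \<noteq> 0 \<Longrightarrow> det M = 0"
  by (metis invertible_det_nz inj_matrix_vector_mult matrix_vector_mult_0_right injD)

lemma det0_kernel: "det (M::'a::field^'n^'n) = 0 \<Longrightarrow> \<exists>z. z \<noteq> 0 \<and> M *v z = 0"
  by (metis invertible_det_nz invertible_left_inverse matrix_left_invertible_ker)

lemma mat_mv: "mat \<mu> *v y = \<mu> *s (y::'a::comm_ring_1^'n)"
  by (simp add: vec_eq_iff matrix_vector_mult_def mat_def if_distrib if_distribR cong: if_cong)

lemma eig_of_vec: "(cmat M) *v y = \<mu> *s y \<Longrightarrow> y \<noteq> 0 \<Longrightarrow> \<mu> \<in> eigenvalues M"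
proof -
  assume a: "(cmat M) *v y = \<mu> *s y" "y \<noteq> 0"
  have "(mat \<mu> - cmat M) *v y = 0" using a(1) by (simp add: matrix_vector_mult_diff_rdistrib mat_mv)
  then show ?thesis using a(2) kernel_det unfolding eigenvalues_def by blast
qed

lemma stein:
  fixes A :: "real^'n^'n" and M :: "real^'r^'r" and D :: "real^'r^'n"
  assumes eA: "\<forall>z\<in>eigenvalues A. norm z < 1"
    and eM: "\<forall>z\<in>eigenvalues M. 0 < norm z \<and> norm z < 1"
    and DD: "D = A ** D ** M"
  shows "D = 0"
proof -
  define cA cM cD where "cA = cmat A" "cM = cmat M" "cD = cmat D"
  have cDD: "cD = cA ** cD ** cM" using DD by (metis cA_cM_cD_def cmat_mult)
  have "det cM \<noteq> 0"
  proof
    assume "det cM = 0"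
    then obtain z where "z \<noteq> 0" "cM *v z = 0" using det0_kernel by blast
    then have "0 \<in> eigenvalues M" using eig_of_vec[of M z 0] by (simp add: cA_cM_cD_def)
    with eM show False by auto
  qed
  then obtain K where K: "cM ** K = mat 1" "K ** cM = mat 1"
    by (metis invertible_det_nz invertible_def)
  have AD: "cA ** cD = cD ** K"
  proof -
    have "cD ** K = cA ** cD ** (cM ** K)" by (subst cDD) (simp add: matrix_mul_assoc)
    then show ?thesis using K by simp
  qed
  have "cD = 0"
  proof (rule sylv[OF AD])
    fix \<mu> y z
    assume y: "y \<noteq> 0" "cA *v y = \<mu> *s y" and z: "z \<noteq> 0" "K *v z = \<mu> *s z"
    have "\<mu> \<in> eigenvalues A" using eig_of_vec[of A y \<mu>] y by (simp add: cA_cM_cD_def)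
    with eA have n1: "norm \<mu> < 1" by auto
    have "z = cM *v (K *v z)" by (simp add: matrix_vector_mul_assoc K)
    also have "\<dots> = \<mu> *s (cM *v z)" by (simp add: z mv_smult)
    finally have zz: "z = \<mu> *s (cM *v z)" .
    then have mu0: "\<mu> \<noteq> 0" using z(1) by auto
    have "cM *v z = (1/\<mu>) *s z" using zz mu0 by (metis vector_smult_assoc nonzero_divide_eq_eq divide_self_if  vector_smult_lid mult.commute times_divide_eq_right)
    then have "1/\<mu> \<in> eigenvalues M" using eig_of_vec[of M z "1/\<mu>"] z(1) by (simp add: cA_cM_cD_def)
    with eM have "norm (1/\<mu>) < 1" by auto
    with n1 mu0 show False by (simp add: norm_divide divide_less_eq)
  qed
  then show ?thesis unfolding cA_cM_cD_def by (rule cmat_eq0)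
qed


lemma pinv_left:
  fixes X :: "real^'a^'b"
  assumes inj: "inj ((*v) X)"
  shows "pinv X ** X = mat 1"
proof -
  define T where "T = transpose X ** X"
  have Tk: "\<forall>x. T *v x = 0 \<longrightarrow> x = 0"
  proof (intro allI impI)
    fix x assume T0: "T *v x = 0"
    have "inner (X *v x) (X *v x) = inner ((X *v x) v* X) x"
      by (simp add: dot_lmul_matrix)
    also have "(X *v x) v* X = T *v x"
      by (simp add: T_def matrix_vector_mul_assoc[symmetric] transpose_matrix_vector)
    finally have "X *v x = 0" using T0 by simp
    then show "x = 0" using inj by (metis injD matrix_vector_mult_0_right)
  qed
  then obtain Ti where Ti1: "Ti ** T = mat 1"
    using matrix_left_invertible_ker[of T] by blast
  then have Ti2: "T ** Ti = mat 1" using matrix_left_right_inverse by blast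
  have Tt: "transpose T = T" by (simp add: T_def matrix_transpose_mul)
  have "transpose Ti ** T = mat 1"
    using Ti2 by (metis Tt matrix_transpose_mul transpose_mat)
  then have Tit: "transpose Ti = Ti"
    by (metis Ti2 matrix_mul_assoc matrix_mul_lid matrix_mul_rid)
  define G where "G = Ti ** transpose X"
  have "G ** X = Ti ** T" by (simp add: G_def T_def matrix_mul_assoc)
  then have GX: "G ** X = mat 1" using Ti1 by simp
  have XGt: "transpose (X ** G) = X ** G"
    by (simp add: G_def matrix_transpose_mul Tit matrix_mul_assoc)
  have PG: "X ** G ** X = X \<and> G ** X ** G = G \<and> transpose (X ** G) = X ** G \<and> transpose (G ** X) = G ** X"
    by (simp add: GX XGt matrix_mul_assoc[symmetric])
  have uniq: "Y = G" if Y: "X ** Y ** X = X \<and> Y ** X ** Y = Y \<and> transpose (X ** Y) = X ** Y \<and> transpose (Y ** X) = Y ** X" for Y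
  proof -
    have YX: "Y ** X = mat 1"
    proof -
      have "G ** (X ** Y ** X) = G ** X" using Y by simp
      then show ?thesis using GX by (simp add: matrix_mul_assoc)
    qed
    have Xt: "transpose X = transpose X ** (X ** G)"
      by (metis PG XGt matrix_transpose_mul)
    have "Y = Y ** (X ** Y)" using Y by (simp add: matrix_mul_assoc)
    also have "\<dots> = Y ** transpose (X ** Y)" using Y by simp
    also have "\<dots> = Y ** transpose Y ** transpose X" by (simp add: matrix_transpose_mul matrix_mul_assoc)
    also have "\<dots> = Y ** transpose Y ** transpose X ** (X ** G)" by (metis Xt matrix_mul_assoc)
    also have "\<dots> = Y ** transpose (X ** Y) ** X ** G" by (simp add: matrix_transpose_mul matrix_mul_assoc)
    also have "\<dots> = (Y ** X) ** (Y ** X) ** G" using Y by (simp add: matrix_mul_assoc)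
    also have "\<dots> = G" using YX by simp
    finally show ?thesis .
  qed
  have "pinv X = G"
    unfolding pinv_def
    apply (rule the_equality)
     apply (rule PG)
    apply (erule uniq)
    done
  then show ?thesis using GX by simp
qed

lemma hcat_cancel:
  fixes X :: "real^'n^'N" and U :: "real^'m^'N" and Y :: "real^'k^'n" and W :: "real^'k^'m"
  assumes inj: "inj ((*v) (hcat X U))" and eq: "X ** Y + U ** W = 0"
  shows "Y = 0 \<and> W = 0"
proof -
  define V :: "real^'k^('n+'m)" where "V = (\<chi> k j. case k of Inl a \<Rightarrow> Y$a$j | Inr b \<Rightarrow> W$b$j)"
  have sp: "sum f (UNIV::('n+'m) set) = sum (f \<circ> Inl) UNIV + sum (f \<circ> Inr) UNIV" for f :: "'n+'m \<Rightarrow> real"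
    by (metis UNIV_Plus_UNIV finite sum.Plus)
  have "hcat X U ** V = X ** Y + U ** W"
    by (simp add: vec_eq_iff matrix_matrix_mult_def hcat_def V_def sp)
  then have HV: "hcat X U ** V = 0" using eq by simp
  obtain L where L: "L ** hcat X U = mat 1" using inj matrix_left_invertible_injective by blast
  have "V = L ** (hcat X U ** V)" by (simp add: matrix_mul_assoc L)
  then have V0: "V = 0" using HV by simp
  have "Y$a$j = 0" for a j
  proof -
    have "V $ Inl a $ j = 0" using V0 by simp
    then show ?thesis by (simp add: V_def)
  qed
  moreover have "W$b$j = 0" for b j
  proof -
    have "V $ Inr b $ j = 0" using V0 by simp
    then show ?thesis by (simp add: V_def)
  qed
  ultimately show ?thesis by (simp add: vec_eq_iff)
qed

lemma left_cancel: "(L::real^'a^'b) ** X = mat 1 \<Longrightarrow> X ** P = X ** Q \<Longrightarrow> P = Q"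
proof -
  assume a: "L ** X = mat 1" "X ** P = X ** Q"
  have "P = (L ** X) ** P" using a(1) by simp
  also have "\<dots> = L ** (X ** Q)" using a(2) by (simp add: matrix_mul_assoc[symmetric])
  also have "\<dots> = Q" using a(1) by (simp add: matrix_mul_assoc)
  finally show ?thesis .
qed


theorem theorem1:
  fixes A :: "real^'n^'n" and B :: "real^'m^'n"
    and X1 X2 :: "real^'n^'N" and U1 :: "real^'m^'N"
    and Z2 :: "real^'n^'N" and ZB :: "real^'N^'m" and UB :: "real^'n^'N"
    and Ahat :: "real^'r^'r" and Bhat :: "real^'m^'r" and Chat :: "real^'r^'n"
    and P Q :: "real^'r^'r" and R S :: "real^'r^'n" and SB :: "real^'r^'m"
    and Rs Ss :: "real^'r^'n"
  assumes A_stable: "\<forall>z\<in>eigenvalues A. norm z < 1"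
    and N_ge: "CARD('N) \<ge> CARD('n) + CARD('m)"
    and data: "\<forall>i. X2$i = A *v (X1$i) + B *v (U1$i)"
    and Zsol: "X2 ** transpose X1 = X1 ** transpose Z2 + U1 ** ZB"
    and UBsol: "X1 ** transpose UB = X1 ** transpose X2 - Z2 ** transpose X1"
    and a1: "regular_pencil (pinv X1 ** Z2) (pinv X1 ** X1)"
    and a2: "pencil_spectrum (pinv X1 ** Z2) (pinv X1 ** X1) \<inter> pencil_spectrum (mat 1) Ahat = {}"
    and a3: "regular_pencil (pinv X1 ** (X2 - UB)) (pinv X1 ** X1)"
    and a4: "pencil_spectrum (pinv X1 ** (X2 - UB)) (pinv X1 ** X1) \<inter> pencil_spectrum (mat 1) Ahat = {}"
    and A2: "\<forall>z\<in>eigenvalues Ahat. 0 < norm z \<and> norm z < 1"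
    and b1: "rank (hcat X1 U1) = CARD('n) + CARD('m)"
    and b2: "rank X1 = CARD('n)"
    and b3: "rank U1 = CARD('m)"
    and Psol: "Ahat ** P ** transpose Ahat + Bhat ** transpose Bhat = P"
    and Qsol: "transpose Ahat ** Q ** Ahat + transpose Chat ** Chat = Q"
    and Rsol: "pinv X1 ** Z2 ** R ** transpose Ahat + pinv X1 ** transpose ZB ** transpose Bhat
                 = pinv X1 ** X1 ** R"
    and Ssol: "pinv X1 ** (X2 - UB) ** S ** Ahat - pinv X1 ** X1 ** Chat = pinv X1 ** X1 ** S"
    and SBsol: "U1 ** SB = UB ** S"
    and Rssol: "A ** Rs ** transpose Ahat + B ** transpose Bhat = Rs"
    and Sssol: "transpose A ** Ss ** Ahat - Chat = Ss"
  shows "2 *\<^sub>R (Q ** Ahat ** P + (transpose S ** R - transpose SB ** transpose Bhat) ** transpose (pinv Ahat))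
           = 2 *\<^sub>R (Q ** Ahat ** P + transpose Ss ** A ** Rs)
         \<and> 2 *\<^sub>R (transpose SB + Q ** Bhat) = 2 *\<^sub>R (transpose Ss ** B + Q ** Bhat)
         \<and> 2 *\<^sub>R (Chat ** P - R) = 2 *\<^sub>R (Chat ** P - Rs)"
proof -
  have cardnm: "CARD('n + 'm) = CARD('n) + CARD('m)"
    by (metis UNIV_Plus_UNIV card_Plus finite)
  have X1inj: "inj ((*v) X1)" using b2 full_rank_injective by blast
  have U1inj: "inj ((*v) U1)" using b3 full_rank_injective by blast
  have Hinj: "inj ((*v) (hcat X1 U1))" using b1 cardnm full_rank_injective by metis
  have GX: "pinv X1 ** X1 = mat 1" by (rule pinv_left[OF X1inj])
  obtain LU where LU: "LU ** U1 = mat 1" using U1inj matrix_left_invertible_injective by blast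
  have X2eq: "X2 = X1 ** transpose A + U1 ** transpose B"
    by (simp add: vec_eq_iff data[rule_format] matrix_matrix_mult_def matrix_vector_mult_def transpose_def mult.commute)
  have e1: "X1 ** (transpose A ** transpose X1) + U1 ** (transpose B ** transpose X1) = X1 ** transpose Z2 + U1 ** ZB"
    using Zsol by (simp add: X2eq madd_r matrix_mul_assoc)
  have "X1 ** (transpose A ** transpose X1 - transpose Z2) + U1 ** (transpose B ** transpose X1 - ZB) = 0"
    using e1 by (simp add: msub_l algebra_simps)
  from hcat_cancel[OF Hinj this]
  have z1: "transpose Z2 = transpose A ** transpose X1" and z2: "ZB = transpose B ** transpose X1" by auto
  have Z2eq: "Z2 = X1 ** A"
    by (metis z1 matrix_transpose_mul transpose_transpose)
  have ZBt: "transpose ZB = X1 ** B"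
    by (simp add: z2 matrix_transpose_mul)
  have X2t: "transpose X2 = A ** transpose X1 + B ** transpose U1"
    by (simp add: X2eq tr_add matrix_transpose_mul)
  have "X1 ** transpose UB = X1 ** (B ** transpose U1)"
    using UBsol by (simp add: X2t Z2eq matrix_add_ldistrib matrix_mul_assoc)
  then have "transpose UB = B ** transpose U1" using left_cancel[OF GX] by blast
  then have UBeq: "UB = U1 ** transpose B"
    by (metis matrix_transpose_mul transpose_transpose)
  have GZ2: "pinv X1 ** Z2 = A" by (simp add: Z2eq matrix_mul_assoc GX)
  have GZB: "pinv X1 ** transpose ZB = B" by (simp add: ZBt matrix_mul_assoc GX)
  have X2UB: "X2 - UB = X1 ** transpose A" by (simp add: X2eq UBeq)
  have GXU: "pinv X1 ** (X2 - UB) = transpose A" by (simp add: X2UB matrix_mul_assoc GX)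
  have Rs': "A ** R ** transpose Ahat + B ** transpose Bhat = R"
    using Rsol by (simp add: GZ2 GZB GX)
  have Ss': "transpose A ** S ** Ahat - Chat = S"
    using Ssol by (simp add: GXU GX)
  have r1: "A ** R ** transpose Ahat = R - B ** transpose Bhat" using Rs' by (metis add_diff_cancel_right')
  have r2: "A ** Rs ** transpose Ahat = Rs - B ** transpose Bhat" using Rssol by (metis add_diff_cancel_right')
  have s1: "transpose A ** S ** Ahat = S + Chat" using Ss' by (metis diff_add_cancel)
  have s2: "transpose A ** Ss ** Ahat = Ss + Chat" using Sssol by (metis diff_add_cancel)
  have "R - Rs = A ** (R - Rs) ** transpose Ahat"
    by (simp add: msub_l msub_r r1 r2)
  moreover have eMt: "\<forall>z\<in>eigenvalues (transpose Ahat). 0 < norm z \<and> norm z < 1"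
    using A2 by (simp add: eig_transpose)
  ultimately have "R - Rs = 0"
    using stein[OF A_stable eMt] by blast
  then have RR: "R = Rs" by simp
  have "S - Ss = transpose A ** (S - Ss) ** Ahat"
    by (simp add: msub_l msub_r s1 s2)
  moreover have eAt: "\<forall>z\<in>eigenvalues (transpose A). norm z < 1"
    by (simp add: eig_transpose A_stable)
  ultimately have "S - Ss = 0"
    using stein[OF eAt A2] by blast
  then have SS: "S = Ss" by simp
  have "U1 ** SB = U1 ** (transpose B ** S)" using SBsol by (simp add: UBeq matrix_mul_assoc)
  then have SBeq: "SB = transpose B ** S" using left_cancel[OF LU] by blast
  have SBt: "transpose SB = transpose S ** B" by (simp add: SBeq matrix_transpose_mul)
  have Ahinj: "inj ((*v) Ahat)"
  proof -
    have "x = 0" if x: "Ahat *v x = 0" for x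
    proof (rule ccontr)
      assume "x \<noteq> 0"
      then have "det Ahat = 0" using kernel_det x by blast
      then have "det (cmat Ahat) = 0" by (simp add: det_cmat)
      then obtain z where "z \<noteq> 0" "cmat Ahat *v z = 0" using det0_kernel by blast
      then have "0 \<in> eigenvalues Ahat" using eig_of_vec[of Ahat z 0] by simp
      with A2 show False by auto
    qed
    then show ?thesis using matrix_left_invertible_ker matrix_left_invertible_injective by blast
  qed
  have PA: "transpose Ahat ** transpose (pinv Ahat) = mat 1"
    by (metis pinv_left[OF Ahinj] matrix_transpose_mul transpose_mat)
  have "transpose S ** R - transpose SB ** transpose Bhat = transpose S ** (A ** R ** transpose Ahat)"
    by (simp add: SBt r1 msub_l matrix_mul_assoc)
  then have "(transpose S ** R - transpose SB ** transpose Bhat) ** transpose (pinv Ahat) = transpose S ** A ** R"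
    by (simp add: matrix_mul_assoc[symmetric] PA)
  then show ?thesis using RR SS SBt by simp
qed

end
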